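(* Let $\kappa$ be a regular uncountable cardinal. If $\kappa$ carries a uniform normal 2-precipitous ideal, then $\kappa\to_{hc}[\kappa]^2_{\omega,2}$.
   Context: An ideal $I$ on $\kappa$ is uniform if it contains every subset of $\kappa$ of size $<\kappa$; it is normal if for every sequence $\langle X_\alpha:\alpha<\kappa\rangle$ of members of $I$, the diagonal union $\{\beta<\kappa:\exists\alpha<\beta\ (\beta\in X_\alpha)\}$ is in $I$. The game $G_I$: Players Empty and Nonempty alternate, Empty moving first, producing a coordinatewise $\subseteq$-decreasing sequence $\langle (A_n,B_n):n\in\omega\rangle$ of pairs of $I$-positive sets; Nonempty wins iff there exist $\alpha<\beta$ with $\alpha\in\bigcap_n A_n$, $\beta\in\bigcap_n B_n$. $I$ is 2-precipitous if Empty has no winning strategy in $G_I$. A graph $(X,E)$ is highly connected if for every $Y\subseteq X$ with $|Y|<|X|$ the induced subgraph on $X\setminus Y$ is connected. For $k\in\omega$, $\kappa\to_{hc}[\kappa]^2_{\omega,k}$ means: for every $c:[\kappa]^2\to\omega$ there exist $H\in[\kappa]^\kappa$ and $K\in[\omega]^k$ such that $(H,c^{-1}(K)\cap[H]^2)$ is highly connected. *)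

theory Defs
  imports Main "HOL-Library.Countable_Set"
begin

unbundle cardinal_syntax

text \<open>The cardinal kappa is represented by a type 'k with a well-order; the elements
  of kappa are the elements of 'k, and the ordinal order is the type's order.\<close>

definition wo_rel_of :: "('k::wellorder) rel" where
  "wo_rel_of = {(x, y). x \<le> y}"

definition ideal_on :: "('k set) set \<Rightarrow> bool" where
  "ideal_on I \<longleftrightarrow> {} \<in> I \<and> UNIV \<notin> I
     \<and> (\<forall>A B. A \<in> I \<and> B \<subseteq> A \<longrightarrow> B \<in> I)
     \<and> (\<forall>A B. A \<in> I \<and> B \<in> I \<longrightarrow> A \<union> B \<in> I)"

definition uniform_ideal :: "('k set) set \<Rightarrow> bool" where
  "uniform_ideal I \<longleftrightarrow> (\<forall>X :: 'k set. |X| <o |UNIV :: 'k set| \<longrightarrow> X \<in> I)"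

definition normal_ideal :: "(('k::wellorder) set) set \<Rightarrow> bool" where
  "normal_ideal I \<longleftrightarrow> (\<forall>X :: 'k \<Rightarrow> 'k set. (\<forall>\<alpha>. X \<alpha> \<in> I)
      \<longrightarrow> {\<beta>. \<exists>\<alpha><\<beta>. \<beta> \<in> X \<alpha>} \<in> I)"

text \<open>The game G_I. A move is a pair (A_n, B_n) of I-positive sets; the moves are
  coordinatewise decreasing. Empty makes the moves with even index.\<close>

definition legal_move :: "('k set) set \<Rightarrow> 'k set \<times> 'k set \<Rightarrow> bool" where
  "legal_move I m \<longleftrightarrow> fst m \<notin> I \<and> snd m \<notin> I"

definition legal_hist :: "('k set) set \<Rightarrow> ('k set \<times> 'k set) list \<Rightarrow> bool" where
  "legal_hist I h \<longleftrightarrow> (\<forall>i < length h. legal_move I (h ! i))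
     \<and> (\<forall>i. Suc i < length h \<longrightarrow> fst (h ! Suc i) \<subseteq> fst (h ! i) \<and> snd (h ! Suc i) \<subseteq> snd (h ! i))"

definition legal_play :: "('k set) set \<Rightarrow> (nat \<Rightarrow> 'k set \<times> 'k set) \<Rightarrow> bool" where
  "legal_play I p \<longleftrightarrow> (\<forall>n. legal_move I (p n))
     \<and> (\<forall>n. fst (p (Suc n)) \<subseteq> fst (p n) \<and> snd (p (Suc n)) \<subseteq> snd (p n))"

definition empty_strategy :: "('k set) set \<Rightarrow> (('k set \<times> 'k set) list \<Rightarrow> 'k set \<times> 'k set) \<Rightarrow> bool" where
  "empty_strategy I \<sigma> \<longleftrightarrow> (\<forall>h. even (length h) \<and> legal_hist I h \<longrightarrow> legal_hist I (h @ [\<sigma> h]))"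

definition consistent_with :: "(('k set \<times> 'k set) list \<Rightarrow> 'k set \<times> 'k set) \<Rightarrow> (nat \<Rightarrow> 'k set \<times> 'k set) \<Rightarrow> bool" where
  "consistent_with \<sigma> p \<longleftrightarrow> (\<forall>n. p (2 * n) = \<sigma> (map p [0..<2 * n]))"

definition nonempty_wins :: "(nat \<Rightarrow> ('k::wellorder) set \<times> 'k set) \<Rightarrow> bool" where
  "nonempty_wins p \<longleftrightarrow> (\<exists>\<alpha> \<beta>. \<alpha> < \<beta> \<and> (\<forall>n. \<alpha> \<in> fst (p n)) \<and> (\<forall>n. \<beta> \<in> snd (p n)))"

definition empty_winning_strategy :: "(('k::wellorder) set) set \<Rightarrow> (('k set \<times> 'k set) list \<Rightarrow> 'k set \<times> 'k set) \<Rightarrow> bool" where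
  "empty_winning_strategy I \<sigma> \<longleftrightarrow> empty_strategy I \<sigma>
     \<and> (\<forall>p. legal_play I p \<and> consistent_with \<sigma> p \<longrightarrow> \<not> nonempty_wins p)"

definition two_precipitous :: "(('k::wellorder) set) set \<Rightarrow> bool" where
  "two_precipitous I \<longleftrightarrow> \<not> (\<exists>\<sigma>. empty_winning_strategy I \<sigma>)"

definition graph_connected :: "'a set \<Rightarrow> 'a set set \<Rightarrow> bool" where
  "graph_connected V E \<longleftrightarrow>
     (\<forall>u\<in>V. \<forall>v\<in>V. (u, v) \<in> {(x, y). x \<in> V \<and> y \<in> V \<and> {x, y} \<in> E}\<^sup>*)"

definition highly_connected :: "'a set \<Rightarrow> 'a set set \<Rightarrow> bool" where
  "highly_connected X E \<longleftrightarrow> (\<forall>Y \<subseteq> X. |Y| <o |X| \<longrightarrow> graph_connected (X - Y) E)"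

text \<open>kappa \<rightarrow>_hc [kappa]^2_{omega,k}; colourings are functions on 2-element sets
  (values on other sets are irrelevant).\<close>

definition hc_partition :: "nat \<Rightarrow> ('k set \<Rightarrow> nat) \<Rightarrow> bool" where
  "hc_partition k c \<longleftrightarrow> (\<exists>H :: 'k set. \<exists>K :: nat set.
      |H| =o |UNIV :: 'k set| \<and> finite K \<and> card K = k
      \<and> highly_connected H {e. e \<subseteq> H \<and> card e = 2 \<and> c e \<in> K})"

definition hc_arrow :: "'k itself \<Rightarrow> nat \<Rightarrow> bool" where
  "hc_arrow _ k \<longleftrightarrow> (\<forall>c :: 'k set \<Rightarrow> nat. hc_partition k c)"

end

theory Submission imports Defs begin

lemma Field_wo: "Field (wo_rel_of :: ('k::wellorder) rel) = UNIV"
  by (auto simp: Field_def wo_rel_of_def)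

lemma Card_wo:
  assumes "card_order (wo_rel_of :: ('k::wellorder) rel)"
  shows "Card_order (wo_rel_of :: 'k rel)"
  using assms by (simp only: Field_wo)

lemma wo_iso:
  assumes "card_order (wo_rel_of :: ('k::wellorder) rel)"
  shows "(wo_rel_of :: 'k rel) =o |UNIV :: 'k set|"
proof -
  have "|Field (wo_rel_of :: 'k rel)| =o (wo_rel_of :: 'k rel)"
    by (rule card_of_Field_ordIso[OF Card_wo[OF assms]])
  then have "|UNIV :: 'k set| =o (wo_rel_of :: 'k rel)" by (simp only: Field_wo)
  then show ?thesis by (rule ordIso_symmetric)
qed

lemma nat_less:
  assumes "\<not> countable (UNIV :: 'k set)"
  shows "|UNIV :: nat set| <o |UNIV :: 'k set|"
proof -
  have nl: "\<not> |UNIV :: 'k set| \<le>o |UNIV :: nat set|"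
  proof
    assume "|UNIV :: 'k set| \<le>o |UNIV :: nat set|"
    then obtain f :: "'k \<Rightarrow> nat" where "inj_on f UNIV"
      unfolding card_of_ordLeq[symmetric] by blast
    then have "countable (UNIV :: 'k set)" unfolding countable_def by blast
    then show False using assms by blast
  qed
  have eq: "(\<not> |UNIV :: 'k set| \<le>o |UNIV :: nat set| ) = ( |UNIV :: nat set| <o |UNIV :: 'k set| )"
    by (rule not_ordLeq_iff_ordLess[OF card_of_Well_order card_of_Well_order])
  show ?thesis using nl unfolding eq .
qed

lemma reg_univ:
  assumes "card_order (wo_rel_of :: ('k::wellorder) rel)"
    and "regularCard (wo_rel_of :: 'k rel)"
    and "\<not> countable (UNIV :: 'k set)"
  shows "regularCard |UNIV :: 'k set|"
proof -
  have "cinfinite (wo_rel_of :: 'k rel)" unfolding cinfinite_def Field_wo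
    using assms(3) countable_finite by blast
  then show ?thesis using regularCard_ordIso[OF wo_iso[OF assms(1)] _ assms(2)] Card_wo[OF assms(1)] by blast
qed

lemma small_union:
  assumes "card_order (wo_rel_of :: ('k::wellorder) rel)"
    and "regularCard (wo_rel_of :: 'k rel)"
    and "\<not> countable (UNIV :: 'k set)"
    and "\<forall>i::nat. |S i| <o |UNIV :: 'k set|"
  shows "|\<Union>i. S i| <o |UNIV :: 'k set|"
proof -
  have "cinfinite |UNIV :: 'k set|" unfolding cinfinite_def Field_card_of
    using assms(3) countable_finite by blast
  moreover have "Card_order |UNIV :: 'k set|" by (rule card_of_Card_order)
  ultimately have ci: "Cinfinite |UNIV :: 'k set|" by blast
  have "\<forall>i \<in> (UNIV :: nat set). |S i| <o |UNIV :: 'k set|" using assms(4) by blast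
  from card_of_UNION_ordLess_infinite_Field_regularCard[OF reg_univ[OF assms(1-3)] ci nat_less[OF assms(3)] this]
  show ?thesis .
qed

lemma small_le:
  assumes "card_order (wo_rel_of :: ('k::wellorder) rel)"
    and "regularCard (wo_rel_of :: 'k rel)"
    and "\<not> countable (UNIV :: 'k set)"
  shows "|{b. b \<le> (a::'k)}| <o |UNIV :: 'k set|"
proof -
  have C: "Card_order (wo_rel_of :: 'k rel)" using assms(1) by (simp add: Field_wo)
  have "|underS (wo_rel_of :: 'k rel) a| <o (wo_rel_of :: 'k rel)"
    by (rule card_of_underS[OF C]) (simp add: Field_wo)
  moreover have "underS (wo_rel_of :: 'k rel) a = {b. b < a}"
    by (auto simp: underS_def wo_rel_of_def)
  ultimately have "|{b. b < a}| <o (wo_rel_of :: 'k rel)" by simp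
  from ordLess_ordIso_trans[OF this wo_iso[OF assms(1)]]
  have 1: "|{b. b < a}| <o |UNIV :: 'k set|" .
  have inf: "infinite (UNIV :: 'k set)" using assms(3) countable_finite by blast
  have 2: "|{a}| <o |UNIV :: 'k set|"
    by (rule finite_ordLess_infinite[OF card_of_Well_order card_of_Well_order]) (simp_all add: Field_card_of inf)
  let ?S = "\<lambda>i::nat. if i = 0 then {b. b < a} else {a}"
  have "\<forall>i. |?S i| <o |UNIV :: 'k set|" using 1 2 by simp
  then have 3: "|\<Union>i. ?S i| <o |UNIV :: 'k set|" by (rule small_union[OF assms])
  have 4: "(\<Union>i. ?S i) = {b. b \<le> a}"
  proof
    show "(\<Union>i. ?S i) \<subseteq> {b. b \<le> a}" by (auto split: if_splits)
    show "{b. b \<le> a} \<subseteq> (\<Union>i. ?S i)"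
    proof
      fix b assume "b \<in> {b. b \<le> a}"
      then have "b < a \<or> b = a" by auto
      then show "b \<in> (\<Union>i. ?S i)"
      proof
        assume "b < a" then show ?thesis by (intro UN_I[of 0]) auto
      next
        assume "b = a" then show ?thesis by (intro UN_I[of 1]) auto
      qed
    qed
  qed
  show ?thesis using 3 unfolding 4 .
qed

lemma ideal_sub: "ideal_on I \<Longrightarrow> A \<subseteq> B \<Longrightarrow> B \<in> I \<Longrightarrow> A \<in> I"
  unfolding ideal_on_def by blast

lemma ideal_un: "ideal_on I \<Longrightarrow> A \<in> I \<Longrightarrow> B \<in> I \<Longrightarrow> A \<union> B \<in> I"
  unfolding ideal_on_def by blast

lemma ideal_diff: "ideal_on I \<Longrightarrow> A \<notin> I \<Longrightarrow> Y \<in> I \<Longrightarrow> A - Y \<notin> I"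
proof
  assume a: "ideal_on I" "A \<notin> I" "Y \<in> I" "A - Y \<in> I"
  then have "(A - Y) \<union> Y \<in> I" using ideal_un by blast
  then show False using a ideal_sub[of I A "(A - Y) \<union> Y"] by blast
qed

lemma pos_ne: "ideal_on I \<Longrightarrow> A \<notin> I \<Longrightarrow> A \<noteq> {}"
  unfolding ideal_on_def by blast

lemma pos_big:
  fixes X :: "'k set"
  assumes "uniform_ideal I" "X \<notin> I"
  shows "|X| =o |UNIV :: 'k set|"
proof -
  have "\<not> |X| <o |UNIV :: 'k set|" using assms(2) assms(1)[unfolded uniform_ideal_def, rule_format, of X] by blast
  then have "|UNIV :: 'k set| \<le>o |X|" using not_ordLess_iff_ordLeq card_of_Well_order by blast
  moreover have "|X| \<le>o |UNIV :: 'k set|" by (rule card_of_mono1) simp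
  ultimately show ?thesis using ordIso_iff_ordLeq by blast
qed

lemma complete:
  fixes I :: "('k::wellorder) set set" and f :: "'k \<Rightarrow> nat"
  assumes "card_order (wo_rel_of :: 'k rel)"
    and "regularCard (wo_rel_of :: 'k rel)"
    and "\<not> countable (UNIV :: 'k set)"
    and I: "ideal_on I" and U: "uniform_ideal I" and N: "normal_ideal I"
    and B: "B \<notin> I"
  shows "\<exists>n. {\<beta>\<in>B. f \<beta> = n} \<notin> I"
proof (rule ccontr)
  assume "\<not> ?thesis"
  then have all: "\<And>n. {\<beta>\<in>B. f \<beta> = n} \<in> I" by blast
  have "infinite (UNIV :: 'k set)" using assms(3) countable_finite by blast
  then obtain e :: "nat \<Rightarrow> 'k" where e: "inj e" using infinite_countable_subset by blast
  define X where "X \<alpha> = (if \<alpha> \<in> range e then {\<beta>\<in>B. f \<beta> = inv e \<alpha>} else {})" for \<alpha>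
  have "\<forall>\<alpha>. X \<alpha> \<in> I" using all I unfolding X_def ideal_on_def by auto
  then have D: "{\<beta>. \<exists>\<alpha><\<beta>. \<beta> \<in> X \<alpha>} \<in> I" using N unfolding normal_ideal_def by blast
  have "|\<Union>i. {b. b \<le> e i}| <o |UNIV :: 'k set|"
    using small_union[OF assms(1-3), of "\<lambda>i. {b. b \<le> e i}"] small_le[OF assms(1-3)] by blast
  then have W: "(\<Union>i. {b. b \<le> e i}) \<in> I" using U unfolding uniform_ideal_def by blast
  have sub: "B \<subseteq> {\<beta>. \<exists>\<alpha><\<beta>. \<beta> \<in> X \<alpha>} \<union> (\<Union>i. {b. b \<le> e i})"
  proof
    fix \<beta> assume b: "\<beta> \<in> B"
    show "\<beta> \<in> {\<beta>. \<exists>\<alpha><\<beta>. \<beta> \<in> X \<alpha>} \<union> (\<Union>i. {b. b \<le> e i})"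
    proof (cases "e (f \<beta>) < \<beta>")
      case True
      have "\<beta> \<in> X (e (f \<beta>))" using b e unfolding X_def by auto
      then show ?thesis using True by blast
    next
      case False
      then show ?thesis by (auto simp: not_less)
    qed
  qed
  have "B \<in> I" using ideal_sub[OF I sub ideal_un[OF I D W]] .
  then show False using B by blast
qed

definition Nb :: "('k::wellorder set \<Rightarrow> nat) \<Rightarrow> nat \<Rightarrow> 'k \<Rightarrow> 'k set \<Rightarrow> 'k set" where
  "Nb c m g Z = {d\<in>Z. g < d \<and> c {g, d} = m}"

definition good :: "('k::wellorder) set set \<Rightarrow> ('k set \<Rightarrow> nat) \<Rightarrow> 'k set \<Rightarrow> 'k set \<Rightarrow> nat \<Rightarrow> bool" where
  "good I c A B m \<longleftrightarrow> (\<forall>X Z. X \<subseteq> A \<longrightarrow> Z \<subseteq> B \<longrightarrow> X \<notin> I \<longrightarrow> Z \<notin> I \<longrightarrow> {g\<in>X. Nb c m g Z \<in> I} \<in> I)"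

lemma good_imp:
  fixes I :: "('k::wellorder) set set" and c :: "'k set \<Rightarrow> nat"
  assumes H: "card_order (wo_rel_of :: 'k rel)"
    "regularCard (wo_rel_of :: 'k rel)"
    "\<not> countable (UNIV :: 'k set)"
    and I: "ideal_on I" and U: "uniform_ideal I" and N: "normal_ideal I"
    and A: "A \<notin> I" and B: "B \<notin> I" and G: "good I c A B m"
  shows "hc_partition 2 c"
proof -
  have ex: "\<exists>n. Nb c n b A \<notin> I" for b
  proof -
    have "|{g. g \<le> b}| <o |UNIV :: 'k set|" using small_le[OF H] .
    then have "{g. g \<le> b} \<in> I" using U unfolding uniform_ideal_def by blast
    then have "A - {g. g \<le> b} \<notin> I" using ideal_diff[OF I A] by blast
    then obtain n where "{g \<in> A - {g. g \<le> b}. c {b, g} = n} \<notin> I"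
      using complete[OF H I U N, of "A - {g. g \<le> b}" "\<lambda>g. c {b, g}"] by blast
    moreover have "{g \<in> A - {g. g \<le> b}. c {b, g} = n} = Nb c n b A"
      by (auto simp: Nb_def not_le)
    ultimately show ?thesis by auto
  qed
  define nb where "nb b = (SOME n. Nb c n b A \<notin> I)" for b
  have nb: "Nb c (nb b) b A \<notin> I" for b using ex[of b] unfolding nb_def by (rule someI_ex)
  obtain n where B': "{b\<in>B. nb b = n} \<notin> I" using complete[OF H I U N B, of nb] by blast
  define B1 where "B1 = {b\<in>B. nb b = n}"
  have B1: "B1 \<notin> I" "B1 \<subseteq> B" using B' unfolding B1_def by auto
  define R where "R = {g\<in>A. Nb c m g B1 \<in> I}"
  have R: "R \<in> I" using G A B1 unfolding good_def R_def by blast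
  define A1 where "A1 = A - R"
  have A1: "A1 \<notin> I" "A1 \<subseteq> A" using ideal_diff[OF I A R] unfolding A1_def by auto
  have A1m: "Nb c m g B1 \<notin> I" if "g \<in> A1" for g using that unfolding A1_def R_def by auto
  have B1n: "Nb c n b A1 \<notin> I" if "b \<in> B1" for b
  proof -
    have "Nb c n b A - R \<notin> I" using ideal_diff[OF I _ R] nb[of b] that unfolding B1_def by auto
    moreover have "Nb c n b A - R \<subseteq> Nb c n b A1" unfolding Nb_def A1_def by auto
    ultimately show ?thesis using ideal_sub[OF I] by blast
  qed
  define K where "K = (if m = n then {m, Suc m} else {m, n})"
  have K: "finite K" "card K = 2" "m \<in> K" "n \<in> K" unfolding K_def by auto
  define Hs where "Hs = A1 \<union> B1"
  have Hpos: "Hs \<notin> I" using A1 ideal_sub[OF I, of A1 Hs] unfolding Hs_def by blast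
  have Hsz: "|Hs| =o |UNIV :: 'k set|" using pos_big[OF U Hpos] .
  define E where "E = {e. e \<subseteq> Hs \<and> card e = 2 \<and> c e \<in> K}"
  have "highly_connected Hs E"
    unfolding highly_connected_def
  proof (intro allI impI)
    fix Y assume Y: "Y \<subseteq> Hs" "|Y| <o |Hs|"
    then have "|Y| <o |UNIV :: 'k set|" using Hsz ordLess_ordIso_trans by blast
    then have YI: "Y \<in> I" using U unfolding uniform_ideal_def by blast
    define V where "V = Hs - Y"
    define Rl where "Rl = {(x, y). x \<in> V \<and> y \<in> V \<and> {x, y} \<in> E}"
    have edge: "(x, y) \<in> Rl\<^sup>* \<and> (y, x) \<in> Rl\<^sup>*"
      if "x \<in> V" "y \<in> V" "x < y" "c {x, y} = m \<or> c {x, y} = n" for x y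
    proof -
      have "{x, y} \<in> E" using that K unfolding E_def V_def by auto
      moreover have "{y, x} = {x, y}" by auto
      ultimately have "(x, y) \<in> Rl" "(y, x) \<in> Rl" using that unfolding Rl_def by auto
      then show ?thesis by auto
    qed
    have pick: "\<exists>x. x \<in> S - Y" if "S \<notin> I" for S
      using pos_ne[OF I ideal_diff[OF I that YI]] by blast
    have c1: "\<exists>u'\<in>A1 - Y. (u, u') \<in> Rl\<^sup>* \<and> (u', u) \<in> Rl\<^sup>*" if u: "u \<in> V" for u
    proof (cases "u \<in> A1")
      case True then show ?thesis using u unfolding V_def by auto
    next
      case False
      then have "u \<in> B1" using u unfolding V_def Hs_def by auto
      then obtain u' where u': "u' \<in> Nb c n u A1 - Y" using pick B1n by blast
      then have "u' \<in> V" "u' \<in> A1 - Y" unfolding V_def Hs_def Nb_def by auto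
      then show ?thesis using edge[OF u \<open>u' \<in> V\<close>] u' unfolding Nb_def by auto
    qed
    have c2: "(x, y) \<in> Rl\<^sup>*" if x: "x \<in> A1 - Y" and y: "y \<in> A1 - Y" for x y
    proof -
      obtain d where d: "d \<in> Nb c m x B1 - Y" using pick A1m x by blast
      define X where "X = Nb c n d A1 - Y"
      define Z where "Z = Nb c m y B1 - Y"
      have dB: "d \<in> B1" using d unfolding Nb_def by auto
      have Xp: "X \<notin> I" unfolding X_def using ideal_diff[OF I B1n[OF dB] YI] .
      have Zp: "Z \<notin> I" unfolding Z_def using ideal_diff[OF I A1m YI] y by blast
      have XA: "X \<subseteq> A" "Z \<subseteq> B" using A1 B1 unfolding X_def Z_def Nb_def by auto
      have "{g\<in>X. Nb c m g Z \<in> I} \<in> I" using G XA Xp Zp unfolding good_def by blast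
      then obtain g where g: "g \<in> X" "Nb c m g Z \<notin> I"
        using Xp ideal_sub[OF I, of X "{g\<in>X. Nb c m g Z \<in> I}"] by blast
      obtain e where e: "e \<in> Nb c m g Z - Y" using pick g(2) by blast
      have xV: "x \<in> V" using x unfolding V_def Hs_def by auto
      have yV: "y \<in> V" using y unfolding V_def Hs_def by auto
      have dV: "d \<in> V" using d unfolding V_def Hs_def Nb_def by auto
      have gV: "g \<in> V" using g unfolding V_def Hs_def Nb_def X_def by auto
      have eV: "e \<in> V" using e unfolding V_def Hs_def Nb_def Z_def by auto
      have 1: "(x, d) \<in> Rl\<^sup>*" using edge[OF xV dV] d unfolding Nb_def by auto
      have 2: "(d, g) \<in> Rl\<^sup>*" using edge[OF dV gV] g unfolding Nb_def X_def by auto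
      have 3: "(g, e) \<in> Rl\<^sup>*" using edge[OF gV eV] e unfolding Nb_def by auto
      have 4: "(e, y) \<in> Rl\<^sup>*" using edge[OF yV eV] e unfolding Nb_def Z_def by auto
      show ?thesis using 1 2 3 4 by (meson rtrancl_trans)
    qed
    show "graph_connected (Hs - Y) E"
      unfolding graph_connected_def
    proof (intro ballI)
      fix u v assume uv: "u \<in> Hs - Y" "v \<in> Hs - Y"
      obtain u' where u': "u' \<in> A1 - Y" "(u, u') \<in> Rl\<^sup>*" using c1 uv unfolding V_def by blast
      obtain v' where v': "v' \<in> A1 - Y" "(v', v) \<in> Rl\<^sup>*" using c1 uv unfolding V_def by blast
      have "(u, v) \<in> Rl\<^sup>*" using u' v' c2[OF u'(1) v'(1)] by (meson rtrancl_trans)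
      then show "(u, v) \<in> {(x, y). x \<in> Hs - Y \<and> y \<in> Hs - Y \<and> {x, y} \<in> E}\<^sup>*"
        unfolding Rl_def V_def .
    qed
  qed
  then have hc: "highly_connected Hs {e. e \<subseteq> Hs \<and> card e = 2 \<and> c e \<in> K}" unfolding E_def .
  show ?thesis unfolding hc_partition_def
    apply (rule exI[of _ Hs], rule exI[of _ K])
    by (intro conjI Hsz K(1) K(2) hc)
qed

lemma exF:
  fixes I :: "('k::wellorder) set set" and c :: "'k set \<Rightarrow> nat"
  assumes I: "ideal_on I" and N: "normal_ideal I" and ng: "\<not> good I c A B k"
  shows "\<exists>p. fst p \<subseteq> A \<and> snd p \<subseteq> B \<and> fst p \<notin> I \<and> snd p \<notin> I
     \<and> (\<forall>g\<in>fst p. \<forall>d\<in>snd p. g < d \<longrightarrow> c {g, d} \<noteq> k)"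
proof -
  obtain X Z where XZ: "X \<subseteq> A" "Z \<subseteq> B" "X \<notin> I" "Z \<notin> I"
    and X0: "{g\<in>X. Nb c k g Z \<in> I} \<notin> I" using ng unfolding good_def by blast
  define X1 where "X1 = {g\<in>X. Nb c k g Z \<in> I}"
  define Xf where "Xf g = (if g \<in> X1 then Nb c k g Z else {})" for g
  have "\<forall>g. Xf g \<in> I" using I unfolding Xf_def X1_def ideal_on_def by auto
  then have D: "{b. \<exists>a<b. b \<in> Xf a} \<in> I" using N unfolding normal_ideal_def by blast
  define Z1 where "Z1 = Z - {b. \<exists>a<b. b \<in> Xf a}"
  have Z1: "Z1 \<notin> I" unfolding Z1_def using ideal_diff[OF I XZ(4) D] .
  have pr: "\<forall>g\<in>X1. \<forall>d\<in>Z1. g < d \<longrightarrow> c {g, d} \<noteq> k"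
  proof (intro ballI impI notI)
    fix g d assume a: "g \<in> X1" "d \<in> Z1" "g < d" "c {g, d} = k"
    then have "d \<in> Xf g" unfolding Xf_def Nb_def Z1_def by auto
    then show False using a unfolding Z1_def by blast
  qed
  have a1: "X1 \<subseteq> A" "X1 \<notin> I" using XZ(1) X0 unfolding X1_def by auto
  have a2: "Z1 \<subseteq> B" using XZ(2) unfolding Z1_def by auto
  show ?thesis
    apply (rule exI[of _ "(X1, Z1)"])
    unfolding fst_conv snd_conv
    by (intro conjI a1 a2 Z1 pr)
qed

theorem mainTheorem6:
  fixes I :: "('k::wellorder) set set"
  assumes "card_order (wo_rel_of :: 'k rel)"
    and "regularCard (wo_rel_of :: 'k rel)"
    and "\<not> countable (UNIV :: 'k set)"
    and "ideal_on I" and "uniform_ideal I" and "normal_ideal I" and "two_precipitous I"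
  shows "hc_arrow TYPE('k) 2"
  unfolding hc_arrow_def
proof (rule allI, rule ccontr)
  fix c :: "'k set \<Rightarrow> nat"
  assume nh: "\<not> hc_partition 2 c"
  note H = assms(1-3) and I = assms(4) and U = assms(5) and N = assms(6)
  have ng: "\<not> good I c A B k" if "A \<notin> I" "B \<notin> I" for A B k
    using good_imp[OF H I U N that] nh by blast
  define F where "F A B k = (SOME p. fst p \<subseteq> A \<and> snd p \<subseteq> B \<and> fst p \<notin> I \<and> snd p \<notin> I
     \<and> (\<forall>g\<in>fst p. \<forall>d\<in>snd p. g < d \<longrightarrow> c {g, d} \<noteq> k))" for A B k
  have F: "fst (F A B k) \<subseteq> A \<and> snd (F A B k) \<subseteq> B \<and> fst (F A B k) \<notin> I \<and> snd (F A B k) \<notin> I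
     \<and> (\<forall>g\<in>fst (F A B k). \<forall>d\<in>snd (F A B k). g < d \<longrightarrow> c {g, d} \<noteq> k)"
    if "A \<notin> I" "B \<notin> I" for A B k
    unfolding F_def using exF[OF I N ng[OF that, of k]] by (rule someI_ex)
  have UI: "UNIV \<notin> I" using I unfolding ideal_on_def by blast
  define \<sigma> where "\<sigma> h = (if h = [] then F UNIV UNIV 0 else F (fst (last h)) (snd (last h)) (length h div 2))"
    for h :: "('k set \<times> 'k set) list"
  have strat: "empty_strategy I \<sigma>"
    unfolding empty_strategy_def
  proof (intro allI impI)
    fix h :: "('k set \<times> 'k set) list"
    assume "even (length h) \<and> legal_hist I h"
    then have lh: "legal_hist I h" by blast
    have lm: "legal_move I (\<sigma> h) \<and> (h \<noteq> [] \<longrightarrow> fst (\<sigma> h) \<subseteq> fst (last h) \<and> snd (\<sigma> h) \<subseteq> snd (last h))"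
    proof (cases "h = []")
      case True
      then show ?thesis using F[OF UI UI, of 0] unfolding \<sigma>_def legal_move_def by auto
    next
      case False
      then have "legal_move I (last h)" using lh unfolding legal_hist_def
        by (simp add: last_conv_nth)
      then have "fst (last h) \<notin> I" "snd (last h) \<notin> I" unfolding legal_move_def by auto
      then show ?thesis using F[of "fst (last h)" "snd (last h)" "length h div 2"] False
        unfolding \<sigma>_def legal_move_def by auto
    qed
    show "legal_hist I (h @ [\<sigma> h])"
      unfolding legal_hist_def
    proof (rule conjI; intro allI impI)
      fix i assume "i < length (h @ [\<sigma> h])"
      then show "legal_move I ((h @ [\<sigma> h]) ! i)" using lh lm unfolding legal_hist_def
        by (cases "i < length h") (auto simp: nth_append)
    next
      fix i assume i: "Suc i < length (h @ [\<sigma> h])"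
      show "fst ((h @ [\<sigma> h]) ! Suc i) \<subseteq> fst ((h @ [\<sigma> h]) ! i) \<and>
            snd ((h @ [\<sigma> h]) ! Suc i) \<subseteq> snd ((h @ [\<sigma> h]) ! i)"
      proof (cases "Suc i < length h")
        case True
        then show ?thesis using lh unfolding legal_hist_def by (auto simp: nth_append)
      next
        case False
        then have si: "Suc i = length h" using i by auto
        have hn: "h \<noteq> []" using si by auto
        have hl: "last h = h ! i" using si hn by (metis diff_Suc_1 last_conv_nth)
        show ?thesis using lm si hn hl by (auto simp: nth_append)
      qed
    qed
  qed
  have win: "\<not> nonempty_wins p" if lp: "legal_play I p" and cw: "consistent_with \<sigma> p" for p
  proof
    assume "nonempty_wins p"
    then obtain a b where ab: "a < b" "\<forall>n. a \<in> fst (p n)" "\<forall>n. b \<in> snd (p n)"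
      unfolding nonempty_wins_def by blast
    define k where "k = c {a, b}"
    have pk: "p (2 * k) = \<sigma> (map p [0..<2 * k])" using cw unfolding consistent_with_def by blast
    have "\<forall>g\<in>fst (p (2 * k)). \<forall>d\<in>snd (p (2 * k)). g < d \<longrightarrow> c {g, d} \<noteq> k"
    proof (cases "k = 0")
      case True
      then show ?thesis using pk F[OF UI UI, of 0] unfolding \<sigma>_def by simp
    next
      case False
      then have ne: "map p [0..<2 * k] \<noteq> []" by simp
      have la: "last (map p [0..<2 * k]) = p (2 * k - 1)" using False
        by (simp add: last_map)
      have "fst (p (2 * k - 1)) \<notin> I" "snd (p (2 * k - 1)) \<notin> I"
        using lp unfolding legal_play_def legal_move_def by auto
      then show ?thesis using pk ne la F[of "fst (p (2 * k - 1))" "snd (p (2 * k - 1))" k]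
        unfolding \<sigma>_def by simp
    qed
    then show False using ab k_def by blast
  qed
  have "empty_winning_strategy I \<sigma>"
    unfolding empty_winning_strategy_def using strat win by blast
  then show False using assms(7) unfolding two_precipitous_def by blast
qed

end
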